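(* Let $G$ be a finite graph that admits a Kasteleyn signing (for example, any planar graph). If $C_1,\dots,C_n$ are channels of $G$ that are linearly independent in the $\mathbf{Z}/2\mathbf{Z}$-vector space $\mathcal{C}(G)$, then $2^n$ divides $m_G^2$. In particular, $|\mathcal{C}(G)|$ divides $m_G^2$. If moreover $G$ is bipartite and admits a bipartite Kasteleyn signing (for example, $G$ is bipartite and planar), and $C_1,\dots,C_n\in\mathcal{C}_B(G)$ are linearly independent, then $2^n$ divides $m_G$.
   Context: All graphs are finite, undirected, without self-loops, with at most one edge between two vertices. $m_G$ denotes the number of perfect matchings of $G$. For a vertex $v$, $N(v)$ is its set of neighbours. A channel of $G=(V,E)$ is a set $C\subseteq V$ such that $|N(v)\cap C|$ is even for every $v\in V$ (the empty set is a channel). $\mathcal{C}(G)$ is the set of channels; it is a vector space over $\mathbf{Z}/2\mathbf{Z}$ with addition given by symmetric difference. If $G$ is bipartite with vertices colored black and white, $\mathcal{C}_B(G)$ (resp. $\mathcal{C}_W(G)$) denotes the subspace of channels consisting only of black (resp. white) vertices. A Kasteleyn signing of $G$ with adjacency matrix $A=(a_{ij})$ is a matrix $K=(\pm a_{ij})$ (obtained by changing signs of some entries) with $\det K=m_G^2$. For bipartite $G$, the bipartite adjacency matrix $B$ is the submatrix of $A$ with rows indexed by white and columns by black vertices; a bipartite Kasteleyn signing is a matrix $H=(\pm b_{ij})$ with $\det H=m_G$ (when $B$ is square; if $B$ is not square, $m_G=0$). *)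

theory Defs
  imports "Jordan_Normal_Form.Determinant"
begin

definition simple_graph :: "nat \<Rightarrow> (nat \<Rightarrow> nat \<Rightarrow> bool) \<Rightarrow> bool" where
  "simple_graph N E \<longleftrightarrow> (\<forall>u v. E u v \<longrightarrow> u < N \<and> v < N \<and> E v u \<and> u \<noteq> v)"

definition edges :: "(nat \<Rightarrow> nat \<Rightarrow> bool) \<Rightarrow> nat set set" where
  "edges E = {{u, v} | u v. E u v}"

definition perfect_matching :: "nat \<Rightarrow> (nat \<Rightarrow> nat \<Rightarrow> bool) \<Rightarrow> nat set set \<Rightarrow> bool" where
  "perfect_matching N E M \<longleftrightarrow> M \<subseteq> edges E \<and> (\<forall>v<N. \<exists>!e. e \<in> M \<and> v \<in> e)"

definition num_pm :: "nat \<Rightarrow> (nat \<Rightarrow> nat \<Rightarrow> bool) \<Rightarrow> nat" where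
  "num_pm N E = card {M. perfect_matching N E M}"

definition channel :: "nat \<Rightarrow> (nat \<Rightarrow> nat \<Rightarrow> bool) \<Rightarrow> nat set \<Rightarrow> bool" where
  "channel N E C \<longleftrightarrow> C \<subseteq> {0..<N} \<and> (\<forall>v<N. even (card {u \<in> C. E v u}))"

text \<open>Sum over Z/2Z (symmetric difference) of the sets C i, i \<in> S.\<close>
definition symdiff_sum :: "nat set \<Rightarrow> (nat \<Rightarrow> 'a set) \<Rightarrow> 'a set" where
  "symdiff_sum S C = {v. odd (card {i \<in> S. v \<in> C i})}"

text \<open>C 0, ..., C (n-1) linearly independent over Z/2Z: no nontrivial combination
  (given by its support S) is the zero vector (empty set).\<close>
definition lin_indep_Z2 :: "nat \<Rightarrow> (nat \<Rightarrow> 'a set) \<Rightarrow> bool" where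
  "lin_indep_Z2 n C \<longleftrightarrow> (\<forall>S \<subseteq> {0..<n}. S \<noteq> {} \<longrightarrow> symdiff_sum S C \<noteq> {})"

definition adj_mat :: "nat \<Rightarrow> (nat \<Rightarrow> nat \<Rightarrow> bool) \<Rightarrow> int mat" where
  "adj_mat N E = mat N N (\<lambda>(i, j). if E i j then 1 else 0)"

definition sign_change_of :: "int mat \<Rightarrow> int mat \<Rightarrow> bool" where
  "sign_change_of K A \<longleftrightarrow> dim_row K = dim_row A \<and> dim_col K = dim_col A \<and>
     (\<forall>i < dim_row A. \<forall>j < dim_col A. K $$ (i, j) = A $$ (i, j) \<or> K $$ (i, j) = - A $$ (i, j))"

definition kasteleyn_signing :: "nat \<Rightarrow> (nat \<Rightarrow> nat \<Rightarrow> bool) \<Rightarrow> int mat \<Rightarrow> bool" where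
  "kasteleyn_signing N E K \<longleftrightarrow> sign_change_of K (adj_mat N E) \<and> det K = int (num_pm N E) ^ 2"

definition bipartite_col :: "nat \<Rightarrow> (nat \<Rightarrow> nat \<Rightarrow> bool) \<Rightarrow> (nat \<Rightarrow> bool) \<Rightarrow> bool" where
  "bipartite_col N E black \<longleftrightarrow> (\<forall>u v. E u v \<longrightarrow> black u \<noteq> black v)"

definition bip_adj_mat :: "(nat \<Rightarrow> nat \<Rightarrow> bool) \<Rightarrow> nat list \<Rightarrow> nat list \<Rightarrow> int mat" where
  "bip_adj_mat E ws bs = mat (length ws) (length bs) (\<lambda>(i, j). if E (ws ! i) (bs ! j) then 1 else 0)"

definition admits_bip_kasteleyn :: "nat \<Rightarrow> (nat \<Rightarrow> nat \<Rightarrow> bool) \<Rightarrow> (nat \<Rightarrow> bool) \<Rightarrow> bool" where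
  "admits_bip_kasteleyn N E black \<longleftrightarrow>
     (\<exists>ws bs. distinct ws \<and> distinct bs \<and>
        set ws = {v. v < N \<and> \<not> black v} \<and> set bs = {v. v < N \<and> black v} \<and>
        (length ws = length bs \<longrightarrow>
           (\<exists>H. sign_change_of H (bip_adj_mat E ws bs) \<and> det H = int (num_pm N E))))"

end

theory Submission
  imports Defs
begin


definition sd :: "'a set \<Rightarrow> 'a set \<Rightarrow> 'a set" where "sd A B = (A - B) \<union> (B - A)"

definition rep :: "int mat \<Rightarrow> nat \<Rightarrow> (nat \<Rightarrow> int) \<Rightarrow> int mat" where
  "rep M i0 r = mat (dim_row M) (dim_col M) (\<lambda>(i,j). if i = i0 then r j else M $$ (i,j))"

lemma rep_det:
  assumes M: "M \<in> carrier_mat k k" and i0: "i0 < k"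
  shows "det (rep M i0 r) = (\<Sum>j<k. r j * cofactor M i0 j)"
proof -
  have C: "rep M i0 r \<in> carrier_mat k k" using M by (simp add: rep_def)
  have cf: "cofactor (rep M i0 r) i0 j = cofactor M i0 j" for j
    unfolding cofactor_def
    by (rule arg_cong[where f="\<lambda>x. _ * det x"], rule eq_matI, insert M i0, auto simp: mat_delete_def rep_def)
  show ?thesis using laplace_expansion_row[OF C i0] cf C i0 M by (simp add: rep_def)
qed

lemma rep_self: assumes M: "M \<in> carrier_mat k k" shows "rep M i0 (\<lambda>j. M $$ (i0, j)) = M"
  using M by (auto simp: rep_def)

lemma rep_row0:
  assumes M: "M \<in> carrier_mat k k" and i0: "i0 < k" and i: "i < k" "i \<noteq> i0"
  shows "det (rep M i0 (\<lambda>j. M $$ (i, j))) = 0"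
proof -
  have C: "rep M i0 (\<lambda>j. M $$ (i, j)) \<in> carrier_mat k k" using M by (simp add: rep_def)
  show ?thesis
    by (rule det_identical_rows[OF C i(2) i(1) i0], insert M i i0, auto simp: rep_def row_def)
qed

lemma core:
  fixes M :: "int mat"
  assumes "M \<in> carrier_mat k k" "V \<subseteq> Pow {0..<k}" "{} \<in> V"
    "\<forall>A\<in>V. \<forall>B\<in>V. sd A B \<in> V"
    "\<forall>S\<in>V. \<forall>j<k. even (\<Sum>i\<in>S. M $$ (i,j))"
  shows "int (card V) dvd det M"
  using assms
proof (induct "card V" arbitrary: M V rule: less_induct)
  case less
  have finV: "finite V" using less(3) by (meson finite_Pow_iff finite_atLeastLessThan finite_subset)
  show ?case
  proof (cases "V = {{}}")
    case True then show ?thesis by simp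
  next
    case False
    then obtain S where S: "S \<in> V" "S \<noteq> {}" using less(4) by blast
    then obtain i0 where i0S: "i0 \<in> S" by blast
    have Sk: "S \<subseteq> {0..<k}" using S less(3) by blast
    have i0: "i0 < k" using i0S Sk by auto
    have finS: "finite S" using Sk finite_subset by blast
    define V' where "V' = {T\<in>V. i0 \<notin> T}"
    define V'' where "V'' = {T\<in>V. i0 \<in> T}"
    have "bij_betw (\<lambda>T. sd T S) V' V''"
    proof (rule bij_betw_byWitness[where f'="\<lambda>T. sd T S"])
      show "\<forall>a\<in>V'. sd (sd a S) S = a" by (auto simp: sd_def)
      show "\<forall>a\<in>V''. sd (sd a S) S = a" by (auto simp: sd_def)
      show "(\<lambda>T. sd T S) ` V' \<subseteq> V''" using less(5) S i0S by (auto simp: V'_def V''_def sd_def)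
      show "(\<lambda>T. sd T S) ` V'' \<subseteq> V'" using less(5) S i0S by (auto simp: V'_def V''_def sd_def)
    qed
    hence c1: "card V'' = card V'" by (simp add: bij_betw_same_card)
    have "V = V' \<union> V''" "V' \<inter> V'' = {}" by (auto simp: V'_def V''_def)
    hence cV: "card V = 2 * card V'" using c1 finV by (simp add: card_Un_disjoint)
    have "{} \<in> V'" using less(4) by (auto simp: V'_def)
    moreover have "finite V'" using finV by (auto simp: V'_def)
    ultimately have "card V' > 0" by (auto simp: card_gt_0_iff)
    hence lt: "card V' < card V" using cV by simp
    define r where "r j = (\<Sum>i\<in>S. M $$ (i,j)) div 2" for j
    define R where "R = rep M i0 r"
    have RC: "R \<in> carrier_mat k k" using less(2) by (simp add: R_def rep_def)
    have IH: "int (card V') dvd det R"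
    proof (rule less(1)[OF lt RC])
      show "V' \<subseteq> Pow {0..<k}" using less(3) by (auto simp: V'_def)
      show "{} \<in> V'" using less(4) by (auto simp: V'_def)
      show "\<forall>A\<in>V'. \<forall>B\<in>V'. sd A B \<in> V'" using less(5) by (auto simp: V'_def sd_def)
      show "\<forall>T\<in>V'. \<forall>j<k. even (\<Sum>i\<in>T. R $$ (i,j))"
      proof (intro ballI allI impI)
        fix T j assume T: "T \<in> V'" and j: "j < k"
        have Tk: "T \<subseteq> {0..<k}" using T less(3) by (auto simp: V'_def)
        have "(\<Sum>i\<in>T. R $$ (i,j)) = (\<Sum>i\<in>T. M $$ (i,j))"
          by (rule sum.cong, insert T Tk j less(2), auto simp: V'_def R_def rep_def)
        thus "even (\<Sum>i\<in>T. R $$ (i,j))" using less(6) T j by (auto simp: V'_def)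
      qed
    qed
    have "2 * det R = (\<Sum>j<k. (2 * r j) * cofactor M i0 j)"
      unfolding R_def rep_det[OF less(2) i0] by (simp add: sum_distrib_left mult.assoc)
    also have "\<dots> = (\<Sum>j<k. (\<Sum>i\<in>S. M $$ (i,j)) * cofactor M i0 j)"
      by (rule sum.cong, insert less(6) S, auto simp: r_def)
    also have "\<dots> = (\<Sum>i\<in>S. \<Sum>j<k. M $$ (i,j) * cofactor M i0 j)"
      by (simp add: sum_distrib_right sum.swap[of _ S])
    also have "\<dots> = (\<Sum>i\<in>S. det (rep M i0 (\<lambda>j. M $$ (i, j))))"
      using rep_det[OF less(2) i0] by simp
    also have "\<dots> = det (rep M i0 (\<lambda>j. M $$ (i0, j)))"
    proof -
      have "(\<Sum>i\<in>S. det (rep M i0 (\<lambda>j. M $$ (i, j)))) = det (rep M i0 (\<lambda>j. M $$ (i0, j))) + (\<Sum>i\<in>S-{i0}. det (rep M i0 (\<lambda>j. M $$ (i, j))))"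
        using finS i0S by (simp add: sum.remove)
      also have "(\<Sum>i\<in>S-{i0}. det (rep M i0 (\<lambda>j. M $$ (i, j)))) = 0"
        by (rule sum.neutral, insert Sk, intro ballI rep_row0[OF less(2) i0], auto)
      finally show ?thesis by simp
    qed
    also have "\<dots> = det M" using rep_self[OF less(2)] by simp
    finally have "det M = 2 * det R" by simp
    thus ?thesis using IH cV by simp
  qed
qed


lemma card_sd_even:
  assumes "finite X" "finite Y"
  shows "even (card (sd X Y)) = even (card X + card Y)"
proof -
  have "sd X Y = (X \<union> Y) - (X \<inter> Y)" by (auto simp: sd_def)
  hence "card (sd X Y) = card (X \<union> Y) - card (X \<inter> Y)"
    using assms by (metis card_Diff_subset finite_Int Int_lower1 le_supI1)
  moreover have "card X + card Y = card (X \<union> Y) + card (X \<inter> Y)"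
    using assms card_Un_Int by blast
  moreover have "card (X \<inter> Y) \<le> card (X \<union> Y)" using assms by (intro card_mono) auto
  ultimately show ?thesis by auto
qed

lemma sum_sign_even:
  assumes "finite S" "\<forall>i\<in>S. f i = a i \<or> f i = - a i"
  shows "even (\<Sum>i\<in>S. f i :: int) = even (\<Sum>i\<in>S. a i)"
  using assms
proof (induct rule: finite_induct)
  case empty then show ?case by simp
next
  case (insert x F)
  then show ?case by auto
qed

lemma sum_ind:
  assumes "finite S"
  shows "(\<Sum>i\<in>S. if P i then 1 else 0 :: int) = int (card {i\<in>S. P i})"
  using assms by (simp add: sum.If_cases Int_def conj_commute)

lemma channel_sd:
  assumes "channel N E A" "channel N E B"
  shows "channel N E (sd A B)"
  unfolding channel_def
proof (intro conjI allI impI)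
  show "sd A B \<subseteq> {0..<N}" using assms by (auto simp: channel_def sd_def)
  fix v assume v: "v < N"
  have fA: "finite {u\<in>A. E v u}" "finite {u\<in>B. E v u}"
    using assms by (auto simp: channel_def intro: finite_subset)
  have "{u \<in> sd A B. E v u} = sd {u\<in>A. E v u} {u\<in>B. E v u}" by (auto simp: sd_def)
  thus "even (card {u \<in> sd A B. E v u})"
    using card_sd_even[OF fA] assms v by (auto simp: channel_def)
qed

lemma ss_sd:
  assumes "finite S" "finite T"
  shows "symdiff_sum (sd S T) C = sd (symdiff_sum S C) (symdiff_sum T C)"
proof -
  have "odd (card {i \<in> sd S T. v \<in> C i}) \<longleftrightarrow> v \<in> sd (symdiff_sum S C) (symdiff_sum T C)" for v
  proof -
    have e: "{i \<in> sd S T. v \<in> C i} = sd {i\<in>S. v \<in> C i} {i\<in>T. v \<in> C i}" by (auto simp: sd_def)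
    show ?thesis unfolding e using card_sd_even[of "{i\<in>S. v \<in> C i}" "{i\<in>T. v \<in> C i}"] assms
      by (auto simp: sd_def symdiff_sum_def)
  qed
  thus ?thesis by (auto simp: symdiff_sum_def)
qed

lemma ss_empty[simp]: "symdiff_sum {} C = {}" by (simp add: symdiff_sum_def)
lemma ss_single[simp]: "symdiff_sum {x} C = C x"
proof -
  have "{i \<in> {x}. v \<in> C i} = (if v \<in> C x then {x} else {})" for v by auto
  thus ?thesis by (auto simp: symdiff_sum_def)
qed

lemma ss_channel:
  assumes "finite S" "S \<subseteq> {0..<n}" "\<forall>i<n. channel N E (C i)"
  shows "channel N E (symdiff_sum S C)"
  using assms
proof (induct rule: finite_induct)
  case empty then show ?case by (simp add: channel_def)
next
  case (insert x F)
  have "insert x F = sd {x} F" using insert(2) by (auto simp: sd_def)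
  hence "symdiff_sum (insert x F) C = sd (C x) (symdiff_sum F C)"
    using ss_sd[of "{x}" F C] insert(1) by simp
  thus ?case using insert channel_sd by auto
qed

lemma ss_sub:
  assumes "finite S" "\<forall>i\<in>S. C i \<subseteq> X"
  shows "symdiff_sum S C \<subseteq> X"
proof
  fix v assume "v \<in> symdiff_sum S C"
  hence "{i \<in> S. v \<in> C i} \<noteq> {}" unfolding symdiff_sum_def by (metis (no_types, lifting) card.empty even_zero mem_Collect_eq)
  thus "v \<in> X" using assms by auto
qed

lemma span_props:
  fixes C :: "nat \<Rightarrow> 'a set" and n :: nat
  defines "V \<equiv> (\<lambda>S. symdiff_sum S C) ` Pow {0..<n}"
  assumes li: "lin_indep_Z2 n C"
  shows "card V = 2 ^ n" "{} \<in> V" "\<forall>A\<in>V. \<forall>B\<in>V. sd A B \<in> V"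
proof -
  have fin: "S \<in> Pow {0..<n} \<Longrightarrow> finite S" for S by (auto intro: finite_subset)
  show cl: "\<forall>A\<in>V. \<forall>B\<in>V. sd A B \<in> V"
  proof (intro ballI)
    fix A B assume "A \<in> V" "B \<in> V"
    then obtain S T where "S \<in> Pow {0..<n}" "T \<in> Pow {0..<n}" "A = symdiff_sum S C" "B = symdiff_sum T C"
      by (auto simp: V_def)
    moreover have "sd S T \<in> Pow {0..<n}" using calculation by (auto simp: sd_def)
    ultimately show "sd A B \<in> V" using ss_sd[of S T C] fin unfolding V_def by (metis image_eqI)
  qed
  show "{} \<in> V" unfolding V_def by (rule image_eqI[of _ _ "{}"]) auto
  have "inj_on (\<lambda>S. symdiff_sum S C) (Pow {0..<n})"
  proof (rule inj_onI)
    fix S T assume S: "S \<in> Pow {0..<n}" and T: "T \<in> Pow {0..<n}" and eq: "symdiff_sum S C = symdiff_sum T C"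
    have "symdiff_sum (sd S T) C = {}" using ss_sd[of S T C] fin[OF S] fin[OF T] eq by (simp add: sd_def)
    moreover have "sd S T \<subseteq> {0..<n}" using S T by (auto simp: sd_def)
    ultimately have "sd S T = {}" using li unfolding lin_indep_Z2_def by blast
    thus "S = T" by (auto simp: sd_def)
  qed
  thus "card V = 2 ^ n" unfolding V_def by (simp add: card_image card_Pow)
qed

lemma kast_dvd:
  assumes K: "sign_change_of K (adj_mat N E)"
    and V: "V \<subseteq> {C. channel N E C}" "{} \<in> V" "\<forall>A\<in>V. \<forall>B\<in>V. sd A B \<in> V"
  shows "int (card V) dvd det K"
proof -
  have KC: "K \<in> carrier_mat N N" using K by (auto simp: sign_change_of_def adj_mat_def)
  have "int (card V) dvd det (transpose_mat K)"
  proof (rule core)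
    show "transpose_mat K \<in> carrier_mat N N" using KC by simp
    show "V \<subseteq> Pow {0..<N}" using V by (auto simp: channel_def)
    show "{} \<in> V" "\<forall>A\<in>V. \<forall>B\<in>V. sd A B \<in> V" using V by auto
    show "\<forall>S\<in>V. \<forall>j<N. even (\<Sum>i\<in>S. transpose_mat K $$ (i, j))"
    proof (intro ballI allI impI)
      fix S j assume S: "S \<in> V" and j: "j < N"
      have Sc: "channel N E S" using S V by auto
      hence SN: "S \<subseteq> {0..<N}" by (auto simp: channel_def)
      hence fS: "finite S" by (auto intro: finite_subset)
      have "(\<Sum>i\<in>S. transpose_mat K $$ (i, j)) = (\<Sum>i\<in>S. K $$ (j, i))"
        by (rule sum.cong, insert SN KC j, auto)
      moreover have "even (\<Sum>i\<in>S. K $$ (j, i)) = even (\<Sum>i\<in>S. if E j i then 1 else 0 :: int)"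
        by (rule sum_sign_even[OF fS], insert K SN j, fastforce simp: sign_change_of_def adj_mat_def)
      moreover have "(\<Sum>i\<in>S. if E j i then 1 else 0 :: int) = int (card {i\<in>S. E j i})"
        by (rule sum_ind[OF fS])
      moreover have "even (card {i\<in>S. E j i})" using Sc j by (auto simp: channel_def)
      ultimately show "even (\<Sum>i\<in>S. transpose_mat K $$ (i, j))" by simp
    qed
  qed
  thus ?thesis using det_transpose[OF KC] by simp
qed


lemma bip_color_bij:
  assumes sg: "simple_graph N E" and bc: "bipartite_col N E black" and pm: "perfect_matching N E M"
  shows "card {v. v < N \<and> black v = c} = card M"
proof -
  let ?X = "{v. v < N \<and> black v = c}"
  define f where "f v = (THE e. e \<in> M \<and> v \<in> e)" for v
  have fv: "f v \<in> M \<and> v \<in> f v" if "v < N" for v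
    using pm that unfolding perfect_matching_def f_def by (metis (no_types, lifting) theI')
  have funiq: "f v = e" if "v < N" "e \<in> M" "v \<in> e" for v e
    using pm that fv[OF that(1)] unfolding perfect_matching_def by blast
  have edge: "\<exists>u w. e = {u, w} \<and> E u w" if "e \<in> M" for e
    using pm that unfolding perfect_matching_def edges_def by blast
  have "bij_betw f ?X M"
  proof (rule bij_betwI')
    fix x y assume x: "x \<in> ?X" and y: "y \<in> ?X"
    show "(f x = f y) = (x = y)"
    proof
      assume eq: "f x = f y"
      obtain u w where uw: "f x = {u, w}" "E u w" using edge fv x by force
      have "black u \<noteq> black w" using bc uw by (auto simp: bipartite_col_def)
      moreover have "x \<in> {u, w}" "y \<in> {u, w}" using fv x y eq uw by (metis mem_Collect_eq)+
      ultimately show "x = y" using x y by auto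
    qed simp
  next
    fix x assume "x \<in> ?X" thus "f x \<in> M" using fv by auto
  next
    fix e assume e: "e \<in> M"
    obtain u w where uw: "e = {u, w}" "E u w" using edge e by blast
    have "black u \<noteq> black w" "u < N" "w < N" using bc sg uw by (auto simp: bipartite_col_def simple_graph_def)
    then obtain v where "v \<in> {u, w}" "black v = c" "v < N" by auto
    thus "\<exists>x\<in>?X. e = f x" using funiq[of v e] e uw by auto
  qed
  thus ?thesis by (rule bij_betw_same_card)
qed

lemma bip_zero:
  assumes sg: "simple_graph N E" and bc: "bipartite_col N E black"
    and ne: "card {v. v < N \<and> \<not> black v} \<noteq> card {v. v < N \<and> black v}"
  shows "num_pm N E = 0"
proof -
  have "{M. perfect_matching N E M} = {}"
  proof (rule ccontr)
    assume "{M. perfect_matching N E M} \<noteq> {}"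
    then obtain M where pm: "perfect_matching N E M" by auto
    have "card {v. v < N \<and> black v = False} = card M" "card {v. v < N \<and> black v = True} = card M"
      using bip_color_bij[OF sg bc pm] by blast+
    thus False using ne by simp
  qed
  thus ?thesis by (simp add: num_pm_def)
qed

lemma part_c:
  assumes sg: "simple_graph N E" and bc: "bipartite_col N E black"
    and ad: "admits_bip_kasteleyn N E black"
    and ch: "\<forall>i<n. channel N E (C i) \<and> C i \<subseteq> {v. black v}" and li: "lin_indep_Z2 n C"
  shows "2 ^ n dvd num_pm N E"
proof -
  obtain ws bs where ws: "distinct ws" "distinct bs" "set ws = {v. v < N \<and> \<not> black v}"
     "set bs = {v. v < N \<and> black v}"
     and H: "length ws = length bs \<longrightarrow> (\<exists>H. sign_change_of H (bip_adj_mat E ws bs) \<and> det H = int (num_pm N E))"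
    using ad unfolding admits_bip_kasteleyn_def by blast
  show ?thesis
  proof (cases "length ws = length bs")
    case False
    hence "card {v. v < N \<and> \<not> black v} \<noteq> card {v. v < N \<and> black v}"
      using ws by (metis distinct_card)
    thus ?thesis using bip_zero[OF sg bc] by simp
  next
    case True
    then obtain H where Hs: "sign_change_of H (bip_adj_mat E ws bs)" and Hd: "det H = int (num_pm N E)"
      using H by blast
    define k where "k = length bs"
    have HC: "H \<in> carrier_mat k k" using Hs True by (auto simp: sign_change_of_def bip_adj_mat_def k_def)
    define V where "V = (\<lambda>S. symdiff_sum S C) ` Pow {0..<n}"
    note sp = span_props[OF li, folded V_def]
    have Vch: "T \<in> V \<Longrightarrow> channel N E T \<and> T \<subseteq> set bs" for T
    proof -
      assume "T \<in> V"
      then obtain S where S: "S \<subseteq> {0..<n}" "T = symdiff_sum S C" by (auto simp: V_def)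
      have fS: "finite S" using S by (auto intro: finite_subset)
      have c: "channel N E T" using ss_channel[OF fS S(1)] ch S by auto
      have "\<forall>i\<in>S. C i \<subseteq> {v. black v}" using ch S by (meson atLeastLessThan_iff subsetD)
      hence "T \<subseteq> {v. black v}" using ss_sub[OF fS, of C] S by blast
      thus ?thesis using c ws by (auto simp: channel_def)
    qed
    define \<Phi> where "\<Phi> T = {j. j < k \<and> bs ! j \<in> T}" for T
    have recon: "T \<subseteq> set bs \<Longrightarrow> T = (\<lambda>j. bs ! j) ` \<Phi> T" for T
    proof
      assume "T \<subseteq> set bs"
      thus "T \<subseteq> (\<lambda>j. bs ! j) ` \<Phi> T"
        unfolding \<Phi>_def k_def by (force simp: in_set_conv_nth image_iff)
    qed (auto simp: \<Phi>_def)
    have inj: "inj_on \<Phi> V"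
    proof (rule inj_onI)
      fix A B assume A: "A \<in> V" and B: "B \<in> V" and eq: "\<Phi> A = \<Phi> B"
      have rA: "A = (\<lambda>j. bs ! j) ` \<Phi> A" by (rule recon) (use Vch[OF A] in blast)
      have rB: "B = (\<lambda>j. bs ! j) ` \<Phi> B" by (rule recon) (use Vch[OF B] in blast)
      show "A = B" by (subst rA, subst rB, simp only: eq)
    qed
    have "int (card (\<Phi> ` V)) dvd det (transpose_mat H)"
    proof (rule core)
      show "transpose_mat H \<in> carrier_mat k k" using HC by simp
      show "\<Phi> ` V \<subseteq> Pow {0..<k}" by (auto simp: \<Phi>_def)
      show "{} \<in> \<Phi> ` V" using sp(2) by (force simp: \<Phi>_def)
      have sdP: "\<Phi> (sd A B) = sd (\<Phi> A) (\<Phi> B)" for A B by (auto simp: \<Phi>_def sd_def)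
      show "\<forall>A\<in>\<Phi> ` V. \<forall>B\<in>\<Phi> ` V. sd A B \<in> \<Phi> ` V"
        using sp(3) by (auto simp: sdP[symmetric])
      show "\<forall>J\<in>\<Phi> ` V. \<forall>i<k. even (\<Sum>j\<in>J. transpose_mat H $$ (j, i))"
      proof (intro ballI allI impI)
        fix J i assume J: "J \<in> \<Phi> ` V" and i: "i < k"
        then obtain T where T: "T \<in> V" "J = \<Phi> T" by auto
        have Jk: "J \<subseteq> {0..<k}" using T by (auto simp: \<Phi>_def)
        hence fJ: "finite J" by (auto intro: finite_subset)
        have "(\<Sum>j\<in>J. transpose_mat H $$ (j, i)) = (\<Sum>j\<in>J. H $$ (i, j))"
          by (rule sum.cong, insert Jk HC i, auto)
        moreover have "even (\<Sum>j\<in>J. H $$ (i, j)) = even (\<Sum>j\<in>J. if E (ws ! i) (bs ! j) then 1 else 0 :: int)"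
          by (rule sum_sign_even[OF fJ], insert Hs Jk i True, fastforce simp: sign_change_of_def bip_adj_mat_def k_def)
        moreover have "(\<Sum>j\<in>J. if E (ws ! i) (bs ! j) then 1 else 0 :: int) = int (card {j\<in>J. E (ws ! i) (bs ! j)})"
          by (rule sum_ind[OF fJ])
        moreover have "card {j\<in>J. E (ws ! i) (bs ! j)} = card {u\<in>T. E (ws ! i) u}"
        proof -
          have inj2: "inj_on (\<lambda>j. bs ! j) {j\<in>J. E (ws ! i) (bs ! j)}"
          proof (rule inj_on_nth[OF ws(2)])
            show "\<forall>j\<in>{j\<in>J. E (ws ! i) (bs ! j)}. j < length bs" using Jk unfolding k_def by auto
          qed
          have Tb: "T \<subseteq> set bs" using Vch[OF T(1)] by blast
          have TT: "T = (\<lambda>j. bs ! j) ` J" using recon[OF Tb] unfolding T(2)[symmetric] .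
          have eq: "(\<lambda>j. bs ! j) ` {j\<in>J. E (ws ! i) (bs ! j)} = {u\<in>T. E (ws ! i) u}"
            unfolding TT by blast
          show ?thesis using card_image[OF inj2] unfolding eq by (rule sym)
        qed
        moreover have "ws ! i \<in> set ws" using i True by (simp add: k_def)
        hence "ws ! i < N" using ws(3) by blast
        moreover from this have "even (card {u\<in>T. E (ws ! i) u})" using Vch[OF T(1)] by (auto simp: channel_def)
        ultimately show "even (\<Sum>j\<in>J. transpose_mat H $$ (j, i))" by simp
      qed
    qed
    hence "int (2 ^ n) dvd int (num_pm N E)"
      using det_transpose[OF HC] Hd card_image[OF inj] sp(1) by simp
    thus ?thesis by (simp only: int_dvd_int_iff)
  qed
qed

theorem theorem3p5:
  fixes N :: nat and E :: "nat \<Rightarrow> nat \<Rightarrow> bool"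
  assumes "simple_graph N E"
    and "\<exists>K. kasteleyn_signing N E K"
  shows "(\<forall>n C. (\<forall>i<n. channel N E (C i)) \<and> lin_indep_Z2 n C \<longrightarrow> 2 ^ n dvd (num_pm N E) ^ 2)
       \<and> card {C. channel N E C} dvd (num_pm N E) ^ 2
       \<and> (\<forall>black. bipartite_col N E black \<and> admits_bip_kasteleyn N E black \<longrightarrow>
            (\<forall>n C. (\<forall>i<n. channel N E (C i) \<and> C i \<subseteq> {v. black v}) \<and> lin_indep_Z2 n C
                \<longrightarrow> 2 ^ n dvd num_pm N E))"
proof (intro conjI allI impI)
  obtain K where K: "sign_change_of K (adj_mat N E)" "det K = int (num_pm N E) ^ 2"
    using assms(2) by (auto simp: kasteleyn_signing_def)
  {
    fix n C assume a: "(\<forall>i<n. channel N E (C i)) \<and> lin_indep_Z2 n C"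
    define V where "V = (\<lambda>S. symdiff_sum S C) ` Pow {0..<n}"
    note sp = span_props[OF conjunct2[OF a], folded V_def]
    have "V \<subseteq> {C. channel N E C}"
    proof
      fix T assume "T \<in> V"
      then obtain S where S: "S \<subseteq> {0..<n}" "T = symdiff_sum S C" by (auto simp: V_def)
      have fS: "finite S" using S(1) by (rule finite_subset) simp
      show "T \<in> {C. channel N E C}" using ss_channel[OF fS S(1)] a S(2) by simp
    qed
    hence "int (card V) dvd det K" using kast_dvd[OF K(1)] sp by blast
    hence "int (2 ^ n) dvd int (num_pm N E ^ 2)" using sp(1) K(2) by simp
    thus "2 ^ n dvd num_pm N E ^ 2" by (simp only: int_dvd_int_iff)
  }
  {
    have "int (card {C. channel N E C}) dvd det K"
    proof (rule kast_dvd[OF K(1)])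
      show "{} \<in> {C. channel N E C}" by (simp add: channel_def)
      show "\<forall>A\<in>{C. channel N E C}. \<forall>B\<in>{C. channel N E C}. sd A B \<in> {C. channel N E C}"
        using channel_sd by blast
    qed simp
    hence "int (card {C. channel N E C}) dvd int (num_pm N E ^ 2)" using K(2) by simp
    thus "card {C. channel N E C} dvd num_pm N E ^ 2" by (simp only: int_dvd_int_iff)
  }
  fix black n C
  assume "bipartite_col N E black \<and> admits_bip_kasteleyn N E black"
    and "(\<forall>i<n. channel N E (C i) \<and> C i \<subseteq> {v. black v}) \<and> lin_indep_Z2 n C"
  thus "2 ^ n dvd num_pm N E" using part_c[OF assms(1)] by blast
qed

end
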